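(* Let $D,E$ be Dyck paths with Dyck words $(d_i)_{i\ge1}$ and $(e_i)_{i\ge1}$. Then $D\le E$ in the poset $(\mathcal{D},\le)$ if and only if $d_i\le e_i$ for all $i\ge1$.
   Context: A Dyck path of length $2m$ ($m\ge0$) is a lattice path from $(0,0)$ to $(2m,0)$ with steps $\nearrow=(1,1)$, $\searrow=(1,-1)$ never going below the $x$-axis; write $P(x)$ for its height at abscissa $x$. Its Dyck word is the infinite $0$-$1$ sequence obtained by replacing $\nearrow$ by $1$, $\searrow$ by $0$, and appending infinitely many $0$'s. A cell is a point $(a,b)\in\mathbb{Z}^2$ with $b\ge0$, $a+b$ even (viewed as the tilted square with vertices $(a,b),(a+1,b\pm1),(a+2,b)$). The Dyck shape of $P$ (length $2m$) is $S(P)=\{(a,b): b\ge0,\ a+b\text{ even},\ 0\le a\le 2m-2,\ b+1\le P(a+1)\}$. Cells are adjacent if they differ by $(\pm1,\pm1)$. A ribbon is a nonempty set of cells, connected for adjacency, containing no four cells $(a,b),(a+1,b+1),(a+1,b-1),(a+2,b)$. For Dyck paths $D$ of length $2m$ and $E$ of length $2m+2$, $D\sqsubset E$ means $S(D)\subseteq S(E)$ and $S(E)\setminus S(D)$ is a ribbon. $(\mathcal{D},\le)$ is the set of all Dyck paths of all lengths (including the empty path) with $\le$ the reflexive and transitive closure of $\sqsubset$. *)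

theory Defs
  imports Main
begin

text \<open>A lattice path is a list of steps; True = up step (1,1), False = down step (1,-1).\<close>

definition height :: "bool list \<Rightarrow> nat \<Rightarrow> int" where
  "height P x = (\<Sum>i<min x (length P). (if P ! i then 1 else -1))"

definition is_dyck :: "bool list \<Rightarrow> bool" where
  "is_dyck P \<longleftrightarrow> (\<forall>x\<le>length P. height P x \<ge> 0) \<and> height P (length P) = 0"

definition dyck_word :: "bool list \<Rightarrow> nat \<Rightarrow> nat" where
  "dyck_word P i = (if 1 \<le> i \<and> i \<le> length P \<and> P ! (i - 1) then 1 else 0)"

type_synonym cell = "int \<times> int"

definition dyck_shape :: "bool list \<Rightarrow> cell set" where
  "dyck_shape P = {(a, b). b \<ge> 0 \<and> even (a + b) \<and> 0 \<le> a \<and> a \<le> int (length P) - 2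
                       \<and> b + 1 \<le> height P (nat (a + 1))}"

definition adjacent :: "cell \<Rightarrow> cell \<Rightarrow> bool" where
  "adjacent c d \<longleftrightarrow> \<bar>fst c - fst d\<bar> = 1 \<and> \<bar>snd c - snd d\<bar> = 1"

definition connected_cells :: "cell set \<Rightarrow> bool" where
  "connected_cells S \<longleftrightarrow>
     (\<forall>c\<in>S. \<forall>d\<in>S. (\<lambda>x y. x \<in> S \<and> y \<in> S \<and> adjacent x y)\<^sup>*\<^sup>* c d)"

definition is_ribbon :: "cell set \<Rightarrow> bool" where
  "is_ribbon S \<longleftrightarrow> S \<noteq> {} \<and> connected_cells S \<and>
     \<not> (\<exists>a b. (a, b) \<in> S \<and> (a + 1, b + 1) \<in> S \<and> (a + 1, b - 1) \<in> S \<and> (a + 2, b) \<in> S)"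

definition cover_rel :: "bool list \<Rightarrow> bool list \<Rightarrow> bool" where
  "cover_rel D E \<longleftrightarrow> is_dyck D \<and> is_dyck E \<and> length E = length D + 2 \<and>
     dyck_shape D \<subseteq> dyck_shape E \<and> is_ribbon (dyck_shape E - dyck_shape D)"

definition dyck_le :: "bool list \<Rightarrow> bool list \<Rightarrow> bool" where
  "dyck_le D E \<longleftrightarrow> (cover_rel)\<^sup>*\<^sup>* D E"

end

theory Submission
  imports Defs
begin


definition wd :: "bool list \<Rightarrow> nat \<Rightarrow> bool" where
  "wd P i \<longleftrightarrow> i < length P \<and> P ! i"

definition hs :: "bool list \<Rightarrow> nat \<Rightarrow> int" where
  "hs P x = (\<Sum>i<x. if wd P i then 1 else -1)"

lemma hs_0[simp]: "hs P 0 = 0" by (simp add: hs_def)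
lemma hs_Suc: "hs P (Suc x) = hs P x + (if wd P x then 1 else -1)"
  by (simp add: hs_def)

lemma height_hs: assumes "x \<le> length P" shows "height P x = hs P x"
proof -
  have "min x (length P) = x" using assms by simp
  then show ?thesis unfolding height_def hs_def wd_def
    using assms by (auto intro: sum.cong)
qed

lemma hs_parity: "even (hs P x + int x)"
proof (induction x)
  case 0 then show ?case by simp
next
  case (Suc x) then show ?case by (simp add: hs_Suc)
qed

lemma hs_le: "hs P x \<le> int x"
  by (induction x) (auto simp: hs_Suc)

lemma dyck_nonneg: "is_dyck P \<Longrightarrow> x \<le> length P \<Longrightarrow> hs P x \<ge> 0"
  using height_hs by (auto simp: is_dyck_def)

lemma dyck_end: "is_dyck P \<Longrightarrow> hs P (length P) = 0"
  using height_hs by (auto simp: is_dyck_def)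

lemma hs_beyond: "length P \<le> x \<Longrightarrow> hs P (x + k) = hs P x - int k"
  by (induction k) (auto simp: hs_Suc wd_def)

lemma dyck_last: assumes "is_dyck P" "0 < length P" shows "height P (length P - 1) = 1"
proof -
  obtain L where L: "length P = Suc L" using assms(2) by (cases "length P") auto
  have "hs P (Suc L) = 0" using dyck_end[OF assms(1)] L by simp
  moreover have "hs P L \<ge> 0" using dyck_nonneg[OF assms(1), of L] L by simp
  ultimately have "hs P L = 1" by (auto simp: hs_Suc split: if_splits)
  then show ?thesis using height_hs[of L P] L by simp
qed

lemma hs_mono: "(\<And>i. wd A i \<Longrightarrow> wd B i) \<Longrightarrow> hs A x \<le> hs B x"
  by (induction x) (auto simp: hs_Suc)

lemma hs_cong: "(\<And>i. i < x \<Longrightarrow> wd A i = wd B i) \<Longrightarrow> hs A x = hs B x"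
  unfolding hs_def by (auto intro: sum.cong)

lemma dyck_len_mono:
  assumes "is_dyck A" "is_dyck B" "\<And>i. wd A i \<Longrightarrow> wd B i"
  shows "length A \<le> length B"
proof (rule ccontr)
  assume "\<not> length A \<le> length B"
  then have "Suc (length B) \<le> length A" by simp
  then have "hs A (Suc (length B)) \<ge> 0" using dyck_nonneg[OF assms(1)] by blast
  moreover have "hs A (Suc (length B)) \<le> hs B (Suc (length B))" using hs_mono assms(3) by blast
  moreover have "hs B (Suc (length B)) = -1" using dyck_end[OF assms(2)] by (simp add: hs_Suc wd_def)
  ultimately show False by simp
qed

lemma wd_eq: "(\<And>i. wd A i = wd B i) \<Longrightarrow> length A = length B \<Longrightarrow> A = B"
  by (rule nth_equalityI) (auto simp: wd_def)

lemma mem_shape: "(a,b) \<in> dyck_shape P \<longleftrightarrow> b \<ge> 0 \<and> even (a+b) \<and> 0 \<le> a \<and> a \<le> int (length P) - 2 \<and> b + 1 \<le> height P (nat (a+1))"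
  by (simp add: dyck_shape_def)

lemma reach_col:
  fixes c d :: "int \<times> 'b"
  assumes "R\<^sup>*\<^sup>* c d" "\<And>x y. R x y \<Longrightarrow> y \<in> S \<and> \<bar>fst x - fst y\<bar> = 1" "c \<in> S" "fst c \<le> k" "k \<le> fst d"
  shows "\<exists>e\<in>S. fst e = k"
  using assms(1,5)
proof (induction rule: rtranclp_induct)
  case base then show ?case using assms(3,4) by (metis order_antisym)
next
  case (step y z)
  show ?case
  proof (cases "k \<le> fst y")
    case True then show ?thesis using step by auto
  next
    case False
    with step.hyps(2) assms(2)[of y z] step.prems have "fst z = k" "z \<in> S" by auto
    then show ?thesis by auto
  qed
qed

lemma sym_rtranclp: "(\<And>x y. R x y \<Longrightarrow> R y x) \<Longrightarrow> R\<^sup>*\<^sup>* x y \<Longrightarrow> R\<^sup>*\<^sup>* y x"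
proof -
  assume s: "\<And>x y. R x y \<Longrightarrow> R y x" and r: "R\<^sup>*\<^sup>* x y"
  from r show "R\<^sup>*\<^sup>* y x"
  proof (induction rule: rtranclp_induct)
    case base then show ?case by simp
  next
    case (step y z) then show ?case using s by (meson converse_rtranclp_into_rtranclp)
  qed
qed



lemma nat_int_p1[simp]: "nat (int x + 1) = Suc x" by simp
lemma nat_int_p2[simp]: "nat (int x + 2) = Suc (Suc x)" by simp
lemma nat_int_p1'[simp]: "nat (1 + int x) = Suc x" by simp
lemma nat_int_p2'[simp]: "nat (2 + int x) = Suc (Suc x)" by simp

lemma cover_sub:
  assumes cv: "cover_rel D E" and wD: "wd D i" shows "wd E i"
proof (rule ccontr)
  assume nE: "\<not> wd E i"
  define n where "n = length D"
  have dD: "is_dyck D" and dE: "is_dyck E" and lenE: "length E = n + 2"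
    and sub: "dyck_shape D \<subseteq> dyck_shape E" and rib: "is_ribbon (dyck_shape E - dyck_shape D)"
    using cv by (auto simp: cover_rel_def n_def)
  have iN: "i < n" using wD by (simp add: wd_def n_def)
  have hDE: "height D x = hs D x" if "x \<le> n" for x using that height_hs n_def by simp
  have hEE: "height E x = hs E x" if "x \<le> n+2" for x using height_hs lenE that by simp
  have ge: "hs D x \<le> hs E x" if "x \<le> n" for x
  proof (cases "hs D x \<le> 0")
    case True then show ?thesis using dyck_nonneg[OF dE, of x] that lenE by simp
  next
    case False
    then have x0: "x \<noteq> 0" by (metis hs_0 order_refl)
    have xn: "x \<noteq> n" using False dyck_end[OF dD] n_def by auto
    have ev: "even (int x - 1 + (hs D x - 1))" using hs_parity[of D x] by presburger
    have "(int x - 1, hs D x - 1) \<in> dyck_shape D"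
      using False x0 xn that ev hDE[OF that] by (auto simp: mem_shape n_def)
    then have "(int x - 1, hs D x - 1) \<in> dyck_shape E" using sub by auto
    then show ?thesis using hEE[of x] that by (auto simp: mem_shape)
  qed
  have si: "hs D (Suc i) = hs D i + 1" using wD by (simp add: hs_Suc)
  have se: "hs E (Suc i) = hs E i - 1" using nE by (simp add: hs_Suc)
  have g1: "hs D (Suc i) \<le> hs E (Suc i)" using ge iN by simp
  have evg: "even (hs E i - hs D i)" using hs_parity[of D i] hs_parity[of E i] by presburger
  have Dpos: "hs D i \<ge> 0" using dyck_nonneg[OF dD] iN n_def by simp
  let ?S = "dyck_shape E - dyck_shape D"
  have g2: "hs E i = hs D i + 2"
  proof (rule ccontr)
    assume "hs E i \<noteq> hs D i + 2"
    then have g4: "hs E i \<ge> hs D i + 4" using g1 si se evg by presburger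
    then have i2: "i \<ge> 2" using hs_le[of E i] Dpos by linarith
    then obtain j where ij: "i = Suc j" by (cases i) auto
    have ha1: "hs D j \<le> hs D i + 1" and ha2: "hs E j \<ge> hs E i - 1"
      using hs_Suc[of D j] hs_Suc[of E j] ij by (auto split: if_splits)
    define b where "b = hs D i + 2"
    have evb: "even (int j - 1 + b)" unfolding b_def proof -
      have "int i = int j + 1" using ij by simp
      then show "even (int j - 1 + (hs D i + 2))" using hs_parity[of D i] by presburger
    qed
    have j1: "j \<ge> 1" using i2 ij by simp
    have c1: "(int j - 1, b) \<in> ?S"
      using evb j1 ha1 ha2 g4 Dpos iN ij hEE[of j] hDE[of j]
      by (auto simp: mem_shape b_def lenE)
    have c2: "(int j, b + 1) \<in> ?S"
      using evb j1 g4 Dpos iN ij hEE[of i] hDE[of i]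
      by (auto simp: mem_shape b_def lenE)
    have c3: "(int j, b - 1) \<in> ?S"
      using evb j1 g4 Dpos iN ij hEE[of i] hDE[of i]
      by (auto simp: mem_shape b_def lenE)
    have c4: "(int j + 1, b) \<in> ?S"
      using evb j1 g4 Dpos iN ij hEE[of "Suc i"] hDE[of "Suc i"] si se
      by (auto simp: mem_shape b_def lenE)
    have e1: "int j - 1 + 1 = int j" "int j - 1 + 2 = int j + 1" by simp_all
    have "\<exists>a b. (a, b) \<in> ?S \<and> (a + 1, b + 1) \<in> ?S \<and> (a + 1, b - 1) \<in> ?S \<and> (a + 2, b) \<in> ?S"
      using c1 c2 c3 c4 e1 by metis
    then show False using rib by (simp add: is_ribbon_def)
  qed
  have gi1: "hs E (Suc i) = hs D (Suc i)" using g2 si se by simp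
  have ipos: "i \<ge> 1" using g2 hs_le[of E i] Dpos by linarith
  define c where "c = (int i - 1, hs D i + 1)"
  define d where "d = (int n, 0::int)"
  have evc: "even (int i - 1 + (hs D i + 1))" using hs_parity[of D i] by presburger
  have cS: "c \<in> ?S"
    using evc ipos iN Dpos g2 hEE[of i] hDE[of i] by (auto simp: c_def mem_shape lenE)
  have hn1: "height E (n+1) = 1" using dyck_last[OF dE] lenE by simp
  have evn: "even n" using hs_parity[of D n] dyck_end[OF dD] n_def by simp
  have dS: "d \<in> ?S"
    using hn1 evn by (auto simp: d_def mem_shape lenE n_def)
  have conn: "(\<lambda>x y. x \<in> ?S \<and> y \<in> ?S \<and> adjacent x y)\<^sup>*\<^sup>* c d"
    using rib cS dS by (auto simp: is_ribbon_def connected_cells_def)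
  obtain e where eS: "e \<in> ?S" and ef: "fst e = int i"
    using reach_col[OF conn, of ?S "int i"] cS iN
    by (auto simp: adjacent_def c_def d_def)
  obtain b' where eb: "e = (int i, b')" using ef by (cases e) auto
  have inE: "b' \<ge> 0" "b' + 1 \<le> hs E (Suc i)"
    using eS eb hEE[of "Suc i"] iN by (auto simp: mem_shape)
  have evb': "even (int i + b')" using eS eb by (auto simp: mem_shape)
  show False
  proof (cases "Suc i < n")
    case True
    then have "e \<in> dyck_shape D" using inE evb' gi1 hDE[of "Suc i"] eb
      by (auto simp: mem_shape n_def)
    then show False using eS by auto
  next
    case False
    then have "Suc i = n" using iN by simp
    then have "hs D (Suc i) = 0" using dyck_end[OF dD] n_def by simp
    then show False using inE gi1 by simp
  qed
qed



lemma add_cover: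
  assumes dD: "is_dyck D" and dE: "is_dyck E" and sub: "\<And>i. wd D i \<Longrightarrow> wd E i"
    and pE: "wd E p" and pD: "\<not> wd D p" and minp: "\<And>i. i < p \<Longrightarrow> wd E i \<Longrightarrow> wd D i"
    and F: "F = (D @ [False, False])[p := True]"
  shows "cover_rel D F \<and> (\<forall>i. wd F i \<longrightarrow> wd E i) \<and> length F = length D + 2"
proof -
  define n where "n = length D"
  have pLE: "p < length E" using pE by (simp add: wd_def)
  have agree: "hs D x = hs E x" if "x \<le> p" for x
    using that minp sub by (intro hs_cong) (meson less_le_trans)
  have hsD1: "hs D (n + 1) = -1" and hsD2: "hs D (n+2) = -2"
    using hs_beyond[of D n 1] hs_beyond[of D n 2] dyck_end[OF dD] n_def by simp_all
  have pn: "p \<le> n"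
  proof (rule ccontr)
    assume "\<not> p \<le> n"
    then have "hs E (n+1) = -1" using agree[of "n+1"] hsD1 by simp
    moreover have "hs E (n+1) \<ge> 0" using dyck_nonneg[OF dE, of "n+1"] pLE \<open>\<not> p \<le> n\<close> by simp
    ultimately show False by simp
  qed
  have lenF: "length F = n + 2" using F n_def by simp
  have plen: "p < length (D @ [False, False])" using pn n_def by simp
  have wdF: "wd F i \<longleftrightarrow> wd D i \<or> i = p" for i
    using pn nth_list_update_eq[OF plen, of True] unfolding F wd_def n_def by (cases "i = p"; auto simp: nth_append nth_list_update_neq less_Suc_eq nth_list_update_eq)
  have hsF: "hs F x = hs D x + (if p < x then 2 else 0)" for x
  proof (induction x)
    case 0 then show ?case by simp
  next
    case (Suc x) then show ?case using pD wdF[of x] by (auto simp: hs_Suc less_Suc_eq)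
  qed
  have hF: "height F x = hs F x" if "x \<le> n + 2" for x using height_hs lenF that by simp
  have hD: "height D x = hs D x" if "x \<le> n" for x using height_hs n_def that by simp
  have Dnn: "hs D x \<ge> 0" if "x \<le> n" for x using dyck_nonneg[OF dD] n_def that by simp
  have Fnn: "hs F x \<ge> 0" if "x \<le> n + 2" for x
  proof (cases "x \<le> p")
    case True then show ?thesis using hsF[of x] agree[of x] dyck_nonneg[OF dE, of x] pLE by simp
  next
    case False
    then have "x \<le> n \<or> x = n + 1 \<or> x = n + 2" using that by auto
    then show ?thesis using False hsF[of x] Dnn[of x] hsD1 hsD2 by auto
  qed
  have dF: "is_dyck F"
    unfolding is_dyck_def using Fnn hF lenF hsF[of "n+2"] hsD2 pn by auto
  have Fn1: "hs F (n+1) = 1" using hsF[of "n+1"] hsD1 pn by simp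
  have subS: "dyck_shape D \<subseteq> dyck_shape F"
  proof
    fix c assume c: "c \<in> dyck_shape D"
    obtain a b where ab: "c = (a, b)" by (cases c)
    have "nat (a + 1) \<le> n" using c ab by (auto simp: mem_shape n_def)
    then have "height D (nat (a+1)) \<le> height F (nat (a+1))"
      using hD hF hsF[of "nat (a+1)"] by simp
    then show "c \<in> dyck_shape F" using c ab by (auto simp: mem_shape n_def lenF)
  qed
  let ?S = "dyck_shape F - dyck_shape D"
  have key: "0 \<le> a \<and> a \<le> int n \<and> b + 1 = hs F (nat (a+1)) \<and> hs D (nat (a+1)) < b + 1"
    if ab: "(a, b) \<in> ?S" for a b
  proof -
    define x where "x = nat (a + 1)"
    have a0: "0 \<le> a" and an: "a \<le> int n" and b0: "b \<ge> 0" and evab: "even (a + b)"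
      and bF: "b + 1 \<le> height F x"
      using ab by (auto simp: mem_shape lenF x_def)
    have ax: "a = int x - 1" using a0 x_def by simp
    have xn: "x \<le> n + 1" using an ax by simp
    have bF': "b + 1 \<le> hs F x" using bF hF xn by simp
    have gtD: "hs D x < b + 1"
    proof -
      consider "x < n" | "x = n" | "x = n + 1" using xn by linarith
      then show ?thesis
      proof cases
        case 1
        have nD: "(a, b) \<notin> dyck_shape D" using ab by simp
        have "a \<le> int (length D) - 2" using 1 ax n_def by simp
        then have "\<not> b + 1 \<le> height D x" using nD b0 evab a0 by (simp add: mem_shape x_def)
        then show ?thesis using hD 1 by simp
      next
        case 2 then show ?thesis using dyck_end[OF dD] n_def b0 by simp
      next
        case 3 then show ?thesis using hsD1 b0 by simp
      qed
    qed
    have "hs F x \<le> hs D x + 2" using hsF[of x] by simp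
    moreover have "even (hs F x - (b + 1))" using hs_parity[of F x] evab ax by presburger
    ultimately have "b + 1 = hs F x" using gtD bF' by presburger
    then show ?thesis using a0 an gtD x_def by simp
  qed
  define d0 where "d0 = (int n, 0::int)"
  have evn: "even n" using hs_parity[of D n] dyck_end[OF dD] n_def by simp
  have d0S: "d0 \<in> ?S" using Fn1 hF[of "n+1"] evn by (auto simp: d0_def mem_shape lenF n_def)
  define R where "R = (\<lambda>x y. x \<in> ?S \<and> y \<in> ?S \<and> adjacent x y)"
  have Rsym: "R x y \<Longrightarrow> R y x" for x y by (auto simp: R_def adjacent_def)
  have reach: "\<forall>a b. (a, b) \<in> ?S \<longrightarrow> nat (int n - a) = k \<longrightarrow> R\<^sup>*\<^sup>* (a, b) d0" for k
  proof (induction k)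
    case 0
    show ?case
    proof (intro allI impI)
      fix a b assume ab: "(a, b) \<in> ?S" and k: "nat (int n - a) = 0"
      then have "a = int n" using key[OF ab] by simp
      then have "b = 0" using key[OF ab] Fn1 by simp
      then show "R\<^sup>*\<^sup>* (a, b) d0" using \<open>a = int n\<close> by (simp add: d0_def)
    qed
  next
    case (Suc k)
    show ?case
    proof (intro allI impI)
      fix a b assume ab: "(a, b) \<in> ?S" and k: "nat (int n - a) = Suc k"
      define x where "x = nat (a + 1)"
      have K: "0 \<le> a" "a \<le> int n" "b + 1 = hs F x" "hs D x < b + 1" using key[OF ab] x_def by auto
      have ax: "a = int x - 1" using K x_def by simp
      have xn: "x \<le> n" using k ax by simp
      have px: "p < x" using K hsF[of x] by (cases "p < x") auto
      have hx1: "hs F (Suc x) = hs D (Suc x) + 2" using hsF[of "Suc x"] px by simp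
      have hx1': "hs D (Suc x) \<ge> -1"
        using Dnn[of "Suc x"] hsD1 xn by (cases "x = n") auto
      define nxt where "nxt = (a + 1, hs F (Suc x) - 1)"
      have evnx: "even (a + 1 + (hs F (Suc x) - 1))" using hs_parity[of F "Suc x"] ax by presburger
      have nS: "nxt \<in> ?S"
      proof -
        have "nxt \<in> dyck_shape F"
          using evnx K xn hx1 hx1' hF[of "Suc x"] ax by (auto simp: nxt_def mem_shape lenF)
        moreover have "nxt \<notin> dyck_shape D"
        proof
          assume "nxt \<in> dyck_shape D"
          then have "int x \<le> int n - 2" "hs F (Suc x) \<le> height D (Suc x)" using ax
            by (auto simp: nxt_def mem_shape n_def)
          then show False using hD[of "Suc x"] hx1 by simp
        qed
        ultimately show ?thesis by simp
      qed
      have adj: "adjacent (a, b) nxt"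
        using K hs_Suc[of F x] by (auto simp: adjacent_def nxt_def)
      have "nat (int n - fst nxt) = k" using k by (simp add: nxt_def)
      then have "R\<^sup>*\<^sup>* nxt d0" using Suc.IH nS by (cases nxt) auto
      moreover have "R (a, b) nxt" using ab nS adj by (simp add: R_def)
      ultimately show "R\<^sup>*\<^sup>* (a, b) d0" by (meson converse_rtranclp_into_rtranclp)
    qed
  qed
  have toD: "R\<^sup>*\<^sup>* c d0" if "c \<in> ?S" for c
    using reach that by (cases c) auto
  have conn: "connected_cells ?S"
    unfolding connected_cells_def
  proof (intro ballI)
    fix c d assume cS: "c \<in> ?S" and dS: "d \<in> ?S"
    have "R\<^sup>*\<^sup>* d d0" using toD dS by blast
    then have "R\<^sup>*\<^sup>* d0 d" using sym_rtranclp[of R d d0] Rsym by blast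
    moreover have "R\<^sup>*\<^sup>* c d0" using toD cS by blast
    ultimately have "R\<^sup>*\<^sup>* c d" by (meson rtranclp_trans)
    then show "(\<lambda>x y. x \<in> ?S \<and> y \<in> ?S \<and> adjacent x y)\<^sup>*\<^sup>* c d" unfolding R_def by simp
  qed
  have no22: "\<not> (\<exists>a b. (a, b) \<in> ?S \<and> (a + 1, b + 1) \<in> ?S \<and> (a + 1, b - 1) \<in> ?S \<and> (a + 2, b) \<in> ?S)"
  proof
    assume "\<exists>a b. (a, b) \<in> ?S \<and> (a + 1, b + 1) \<in> ?S \<and> (a + 1, b - 1) \<in> ?S \<and> (a + 2, b) \<in> ?S"
    then obtain a b where "(a + 1, b + 1) \<in> ?S" "(a + 1, b - 1) \<in> ?S" by blast
    from key[OF this(1)] key[OF this(2)] show False by simp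
  qed
  have rib: "is_ribbon ?S" unfolding is_ribbon_def using d0S conn no22 by blast
  have "cover_rel D F" unfolding cover_rel_def using dD dF lenF n_def subS rib by simp
  moreover have "\<forall>i. wd F i \<longrightarrow> wd E i" using wdF sub pE by blast
  ultimately show ?thesis using lenF n_def by simp
qed



lemma le_imp_sub: "dyck_le D E \<Longrightarrow> wd D i \<Longrightarrow> wd E i"
  unfolding dyck_le_def
proof (induction rule: rtranclp_induct)
  case base then show ?case by simp
next
  case (step y z) then show ?case using cover_sub by blast
qed

lemma sub_imp_le:
  assumes "is_dyck D" "is_dyck E" "\<And>i. wd D i \<Longrightarrow> wd E i"
  shows "dyck_le D E"
  using assms
proof (induction "length E - length D" arbitrary: D rule: less_induct)
  case less
  show ?case
  proof (cases "\<forall>i. wd E i \<longrightarrow> wd D i")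
    case True
    then have eq: "\<And>i. wd D i = wd E i" using less.prems by blast
    have "length D \<le> length E" "length E \<le> length D"
      using dyck_len_mono less.prems eq by blast+
    then have "D = E" using wd_eq eq by simp
    then show ?thesis by (simp add: dyck_le_def)
  next
    case False
    then have ex: "\<exists>q. wd E q \<and> \<not> wd D q" by blast
    define p where "p = (LEAST q. wd E q \<and> \<not> wd D q)"
    have p: "wd E p \<and> \<not> wd D p" unfolding p_def using ex by (rule LeastI_ex)
    have minp: "wd D i" if "i < p" "wd E i" for i
      using not_less_Least[of i "\<lambda>q. wd E q \<and> \<not> wd D q"] that p_def by blast
    define F where "F = (D @ [False, False])[p := True]"
    have res: "cover_rel D F \<and> (\<forall>i. wd F i \<longrightarrow> wd E i) \<and> length F = length D + 2"
      using add_cover[OF less.prems(1,2)] less.prems(3) p minp F_def by blast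
    then have dF: "is_dyck F" by (simp add: cover_rel_def)
    have "length F \<le> length E" using dyck_len_mono[OF dF less.prems(2)] res by blast
    then have "length E - length F < length E - length D" using res by simp
    then have "dyck_le F E" using less.hyps dF less.prems(2) res by blast
    then show ?thesis using res unfolding dyck_le_def by (meson converse_rtranclp_into_rtranclp)
  qed
qed

lemma word_iff: "(\<forall>i\<ge>1. dyck_word D i \<le> dyck_word E i) \<longleftrightarrow> (\<forall>i. wd D i \<longrightarrow> wd E i)"
proof -
  have dw: "dyck_word P (Suc i) = (if wd P i then 1 else 0)" for P i
    by (simp add: dyck_word_def wd_def Suc_le_eq)
  show ?thesis
  proof
    assume h: "\<forall>i\<ge>1. dyck_word D i \<le> dyck_word E i"
    show "\<forall>i. wd D i \<longrightarrow> wd E i"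
    proof (intro allI impI)
      fix i assume "wd D i"
      then show "wd E i" using h[rule_format, of "Suc i"] dw[of D i] dw[of E i] by (auto split: if_splits)
    qed
  next
    assume h: "\<forall>i. wd D i \<longrightarrow> wd E i"
    show "\<forall>i\<ge>1. dyck_word D i \<le> dyck_word E i"
    proof (intro allI impI)
      fix i :: nat assume "i \<ge> 1"
      then obtain j where "i = Suc j" by (cases i) auto
      then show "dyck_word D i \<le> dyck_word E i" using h dw[of D j] dw[of E j] by auto
    qed
  qed
qed

theorem mainTheorem4:
  assumes "is_dyck D" and "is_dyck E"
  shows "dyck_le D E \<longleftrightarrow> (\<forall>i\<ge>1. dyck_word D i \<le> dyck_word E i)"
  unfolding word_iff using assms le_imp_sub sub_imp_le by blast


end
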